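(* Let $m\ge 2$ be an integer and $\alpha\in(0,1)$. There exists a nonzero finite Borel measure $\mu$ on $\mathbb{T}$ such that $\operatorname{ess\,sup}_{x} \Theta^{\alpha,*}(\mu,x)<\infty$, $\operatorname{ess\,inf}_{x}\Theta_{\alpha,*}(\mu,x)>0$ (essential supremum/infimum with respect to $\mu$), and $$\mathcal{C}(\mu,\alpha) \leq \frac{\lceil m^{\alpha}\rceil}{\lfloor m^{\alpha}\rfloor}.$$
   Context: Fix an integer $m\ge 2$ and let $\mathbb{T}=\{0,1,\dots,m-1\}^{\mathbb{N}}$ be the set of infinite sequences with entries in $\{0,\dots,m-1\}$. For distinct $a,b\in\mathbb{T}$ let $n(a,b)$ be the first index at which they differ and set $d(a,b)=m^{-n(a,b)+1}$ ($d(a,a)=0$). For an integer $n\ge0$ and $x\in\mathbb{T}$, $B_n(x)=B(x,m^{-n})$ is the set of sequences agreeing with $x$ in the first $n$ positions (an interval of level $n$). For a Borel measure $\mu$ on $\mathbb{T}$ and $\alpha>0$: $\Theta^{\alpha,*}(\mu,x)=\limsup_{n\to\infty} m^{\alpha n}\mu(B_n(x))$ and $\Theta_{\alpha,*}(\mu,x)=\liminf_{n\to\infty} m^{\alpha n}\mu(B_n(x))$. Define $\mathcal{C}(\mu,\alpha)=\dfrac{\operatorname{ess\,sup}_{x\in\mathbb{T}}\Theta^{\alpha,*}(\mu,x)}{\operatorname{ess\,inf}_{x\in\mathbb{T}}\Theta_{\alpha,*}(\mu,x)}$ (with respect to $\mu$) whenever the numerator is finite and the denominator positive. $\lfloor\cdot\rfloor,\lceil\cdot\rceil$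 denote floor and ceiling. *)

theory Defs
  imports "HOL-Analysis.Analysis" "HOL-Probability.Essential_Supremum"
begin

definition seqspace :: "nat \<Rightarrow> (nat \<Rightarrow> nat) set" where
  "seqspace m = {x. \<forall>i. x i < m}"

text \<open>Interval of level n: sequences agreeing with x in the first n positions
  (= the ball B(x, m^-n) for the metric d).\<close>
definition cyl :: "nat \<Rightarrow> nat \<Rightarrow> (nat \<Rightarrow> nat) \<Rightarrow> (nat \<Rightarrow> nat) set" where
  "cyl m n x = {y \<in> seqspace m. \<forall>i<n. y i = x i}"

text \<open>The Borel sigma-algebra of the ultrametric d on T: it is generated by the
  balls, i.e. by the intervals (cylinders), since T is separable and every open set
  is a countable union of intervals.\<close>
definition borelT :: "nat \<Rightarrow> (nat \<Rightarrow> nat) set set" where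
  "borelT m = sigma_sets (seqspace m) {cyl m n x | n x. x \<in> seqspace m}"

definition upper_density :: "nat \<Rightarrow> (nat \<Rightarrow> nat) measure \<Rightarrow> real \<Rightarrow> (nat \<Rightarrow> nat) \<Rightarrow> ereal" where
  "upper_density m \<mu> \<alpha> x =
     limsup (\<lambda>n. ereal (real m powr (\<alpha> * real n) * measure \<mu> (cyl m n x)))"

definition lower_density :: "nat \<Rightarrow> (nat \<Rightarrow> nat) measure \<Rightarrow> real \<Rightarrow> (nat \<Rightarrow> nat) \<Rightarrow> ereal" where
  "lower_density m \<mu> \<alpha> x =
     liminf (\<lambda>n. ereal (real m powr (\<alpha> * real n) * measure \<mu> (cyl m n x)))"

definition essinf :: "'a measure \<Rightarrow> ('a \<Rightarrow> ereal) \<Rightarrow> ereal" where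
  "essinf M f = - esssup M (\<lambda>x. - f x)"

definition Cconst :: "nat \<Rightarrow> (nat \<Rightarrow> nat) measure \<Rightarrow> real \<Rightarrow> real" where
  "Cconst m \<mu> \<alpha> = real_of_ereal (esssup \<mu> (upper_density m \<mu> \<alpha>))
                  / real_of_ereal (essinf \<mu> (lower_density m \<mu> \<alpha>))"

end

theory Submission
  imports Defs "HOL-Probability.Probability"
begin

definition pre :: "nat \<Rightarrow> (nat \<Rightarrow> nat) \<Rightarrow> (nat \<Rightarrow> nat)" where
  "pre n x = (\<lambda>i. if i < n then x i else 0)"

lemma cyl_pre: "cyl m n x = cyl m n (pre n x)"
  by (auto simp: cyl_def pre_def)

lemma borelT_sigma: "sets (sigma (seqspace m) {cyl m n x | n x. x \<in> seqspace m}) = borelT m"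
  "space (sigma (seqspace m) {cyl m n x | n x. x \<in> seqspace m}) = seqspace m"
  by (auto simp: borelT_def cyl_def intro!: sets_measure_of space_measure_of)

lemma pre_pre[simp]: "pre n (pre n x) = pre n x" by (auto simp: pre_def)
lemma pre_seq: "0 < m \<Longrightarrow> x \<in> seqspace m \<Longrightarrow> pre n x \<in> seqspace m"
  by (auto simp: pre_def seqspace_def)
lemma pre_cyl: "x \<in> seqspace m \<Longrightarrow> x \<in> cyl m n (pre n x)"
  by (auto simp: pre_def cyl_def)

lemma prefix_sets:
  assumes m: "0 < m"
  shows "{x \<in> seqspace m. P (pre n x)} \<in> borelT m"
proof -
  let ?T = "sigma (seqspace m) {cyl m n x | n x. x \<in> seqspace m}"
  let ?Y = "pre n ` seqspace m"
  have fin: "finite ?Y"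
  proof (rule finite_subset)
    show "?Y \<subseteq> {g. \<forall>i. (i \<in> {..<n} \<longrightarrow> g i \<in> {..<m}) \<and> (i \<notin> {..<n} \<longrightarrow> g i = 0)}"
      by (auto simp: pre_def seqspace_def)
  qed (rule finite_set_of_finite_funs, auto)
  have eq1: "{x \<in> seqspace m. P (pre n x)} \<subseteq> (\<Union>y\<in>{y\<in>?Y. P y}. cyl m n y)"
  proof safe
    fix x assume "x \<in> seqspace m" "P (pre n x)"
    then show "x \<in> (\<Union>y\<in>{y\<in>?Y. P y}. cyl m n y)"
      using pre_cyl[of x m n] by (intro UN_I[of "pre n x"]) auto
  qed
  have "x \<in> seqspace m \<and> P (pre n x)" if "x \<in> (\<Union>y\<in>{y\<in>?Y. P y}. cyl m n y)" (is "_ \<in> ?U") for x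
  proof -
    obtain z where z: "x \<in> cyl m n (pre n z)" "z \<in> seqspace m" "P (pre n z)"
      using \<open>x \<in> ?U\<close> by blast
    moreover have "pre n x = pre n z" using z(1)
      by (auto simp: cyl_def pre_def)
    ultimately show ?thesis by (auto simp: cyl_def)
  qed
  then have eq: "{x \<in> seqspace m. P (pre n x)} = (\<Union>y\<in>{y\<in>?Y. P y}. cyl m n y)"
    using eq1 by blast
  have "(\<Union>y\<in>{y\<in>?Y. P y}. cyl m n y) \<in> sets ?T"
  proof (rule sets.finite_UN)
    show "finite {y\<in>?Y. P y}" using fin by auto
    fix y assume "y \<in> {y\<in>?Y. P y}"
    then have "y \<in> seqspace m" using m by (auto simp: pre_def seqspace_def)
    then show "cyl m n y \<in> sets ?T"
      by (auto simp: borelT_sigma borelT_def intro!: sigma_sets.Basic)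
  qed
  then show ?thesis using eq borelT_sigma by simp
qed

lemma measurable_pre:
  fixes h :: "(nat \<Rightarrow> nat) \<Rightarrow> 'b::topological_space"
  assumes m: "0 < m" and sp: "space M = seqspace m" and st: "sets M = borelT m"
    and h: "\<And>x. x \<in> seqspace m \<Longrightarrow> h x = F (pre n x)"
  shows "h \<in> borel_measurable M"
proof (rule measurableI)
  fix A :: "'b set" assume "A \<in> sets borel"
  have "h -` A \<inter> space M = {x \<in> seqspace m. F (pre n x) \<in> A}"
    using h sp by auto
  then show "h -` A \<inter> space M \<in> sets M" using prefix_sets[OF m] st by simp
qed auto

definition PP :: "(nat \<Rightarrow> nat) \<Rightarrow> (nat \<Rightarrow> nat) measure" where
  "PP k = PiM UNIV (\<lambda>i. measure_pmf (pmf_of_set {0..<k i}))"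

definition TT :: "nat \<Rightarrow> (nat \<Rightarrow> nat) measure" where
  "TT m = sigma (seqspace m) {cyl m n x | n x. x \<in> seqspace m}"

definition gg :: "nat \<Rightarrow> (nat \<Rightarrow> nat) \<Rightarrow> (nat \<Rightarrow> nat)" where
  "gg m w = (\<lambda>i. w i mod m)"

lemma space_PP: "space (PP k) = UNIV"
  by (simp add: PP_def space_PiM)

lemma PP_emb: assumes m: "0 < m" shows
  "gg m -` {x \<in> seqspace m. \<forall>i<n. x i \<in> A i} \<inter> space (PP k) =
   prod_emb UNIV (\<lambda>i. measure_pmf (pmf_of_set {0..<k i})) {..<n} (PiE {..<n} (\<lambda>i. {y. y mod m \<in> A i}))"
proof -
  have "gg m w \<in> seqspace m" for w using m by (auto simp: gg_def seqspace_def)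
  then show ?thesis
    by (auto simp: space_PP prod_emb_def gg_def restrict_PiE_iff space_PiM)
qed

lemma PP_emb_sets: assumes m: "0 < m" shows
  "gg m -` {x \<in> seqspace m. \<forall>i<n. x i \<in> A i} \<inter> space (PP k) \<in> sets (PP k)"
  unfolding PP_emb[OF m] by (simp add: PP_def sets_PiM_I)

lemma gg_meas: assumes "0 < m" shows "gg m \<in> measurable (PP k) (TT m)"
  unfolding TT_def
proof (rule measurable_measure_of)
  show "{cyl m n x | n x. x \<in> seqspace m} \<subseteq> Pow (seqspace m)" by (auto simp: cyl_def)
  show "gg m \<in> space (PP k) \<rightarrow> seqspace m" using assms by (auto simp: gg_def seqspace_def)
  fix y assume "y \<in> {cyl m n x | n x. x \<in> seqspace m}"
  then obtain n x where y: "y = cyl m n x" by auto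
  have "y = {z \<in> seqspace m. \<forall>i<n. z i \<in> {x i}}" by (auto simp: y cyl_def)
  then show "gg m -` y \<inter> space (PP k) \<in> sets (PP k)" using PP_emb_sets[OF assms, of n "\<lambda>i. {x i}" k] by simp
qed

lemma mu_emeasure:
  assumes m: "0 < m" and k: "\<And>i. 0 < k i"
  shows "emeasure (distr (PP k) (TT m) (gg m)) {x \<in> seqspace m. \<forall>i<n. x i \<in> A i}
     = (\<Prod>i<n. emeasure (measure_pmf (pmf_of_set {0..<k i})) {y. y mod m \<in> A i})"
proof -
  have S: "{x \<in> seqspace m. \<forall>i<n. x i \<in> A i} \<in> sets (TT m)"
    using prefix_sets[OF m, of "\<lambda>y. \<forall>i<n. y i \<in> A i" n]
    by (simp add: TT_def borelT_sigma pre_def)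
  show ?thesis
    unfolding emeasure_distr[OF gg_meas[OF m] S] PP_emb[OF m]
    unfolding PP_def using k by (subst emeasure_PiM_emb) (auto simp: prob_space_measure_pmf)
qed

fun NN :: "real \<Rightarrow> nat \<Rightarrow> nat \<Rightarrow> nat \<Rightarrow> nat" where
  "NN a c f 0 = 1"
| "NN a c f (Suc n) = NN a c f n * (if real (NN a c f n) < a ^ n then c else f)"

definition kk :: "real \<Rightarrow> nat \<Rightarrow> nat \<Rightarrow> nat \<Rightarrow> nat" where
  "kk a c f n = (if real (NN a c f n) < a ^ n then c else f)"

lemma NN_prod: "NN a c f n = (\<Prod>i<n. kk a c f i)"
  by (induction n) (auto simp: kk_def)

lemma NN_inv:
  assumes "1 \<le> f" "real f \<le> a" "a \<le> real c"
  shows "real f * a ^ n \<le> a * NN a c f n \<and> a * NN a c f n \<le> real c * a ^ n"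
proof (induction n)
  case 0
  then show ?case using assms by simp
next
  case (Suc n)
  have a0: "0 < a" using assms by linarith
  show ?case
  proof (cases "real (NN a c f n) < a ^ n")
    case True
    have "real f * a ^ Suc n = a * (real f * a ^ n)" by simp
    also have "\<dots> \<le> a * (a * NN a c f n)" using Suc a0 by (intro mult_left_mono) auto
    also have "\<dots> \<le> a * (real c * NN a c f n)" using a0 assms by (intro mult_left_mono mult_right_mono) auto
    finally have 1: "real f * a ^ Suc n \<le> a * real (NN a c f (Suc n))" using True by (simp add: ac_simps)
    have "a * real (NN a c f (Suc n)) = a * (real c * NN a c f n)" using True by simp
    also have "\<dots> \<le> a * (real c * a ^ n)" using True a0 assms
      by (intro mult_left_mono) auto
    finally have 2: "a * real (NN a c f (Suc n)) \<le> real c * a ^ Suc n" by (simp add: ac_simps)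
    show ?thesis using 1 2 by simp
  next
    case False
    have "real f * a ^ Suc n = a * (real f * a ^ n)" by simp
    also have "\<dots> \<le> a * (real f * NN a c f n)" using False a0 assms
      by (intro mult_left_mono) auto
    finally have 1: "real f * a ^ Suc n \<le> a * real (NN a c f (Suc n))" using False by (simp add: ac_simps)
    have "a * real (NN a c f (Suc n)) = real f * (a * NN a c f n)" using False by simp
    also have "\<dots> \<le> a * (a * NN a c f n)" using a0 assms by (intro mult_right_mono) auto
    also have "\<dots> \<le> a * (real c * a ^ n)" using Suc a0 by (intro mult_left_mono) auto
    finally have 2: "a * real (NN a c f (Suc n)) \<le> real c * a ^ Suc n" by (simp add: ac_simps)
    show ?thesis using 1 2 by simp
  qed
qed

theorem theorem2:
  fixes m :: nat and \<alpha> :: real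
  assumes "m \<ge> 2" and "0 < \<alpha>" and "\<alpha> < 1"
  shows "\<exists>\<mu> :: (nat \<Rightarrow> nat) measure.
           space \<mu> = seqspace m \<and> sets \<mu> = borelT m \<and>
           emeasure \<mu> (seqspace m) < \<infinity> \<and> emeasure \<mu> (seqspace m) \<noteq> 0 \<and>
           esssup \<mu> (upper_density m \<mu> \<alpha>) < \<infinity> \<and>
           essinf \<mu> (lower_density m \<mu> \<alpha>) > 0 \<and>
           Cconst m \<mu> \<alpha> \<le> real_of_int \<lceil>real m powr \<alpha>\<rceil> / real_of_int \<lfloor>real m powr \<alpha>\<rfloor>"
proof -
  define a where "a = real m powr \<alpha>"
  define c where "c = nat \<lceil>a\<rceil>"
  define f where "f = nat \<lfloor>a\<rfloor>"
  define k where "k = kk a c f"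
  define \<mu> where "\<mu> = distr (PP k) (TT m) (gg m)"
  have m0: "0 < m" using assms by simp
  have a1: "1 < a" unfolding a_def using assms
    using powr_less_mono[of 0 \<alpha> "real m"] by auto
  have am: "a < real m" unfolding a_def using assms
    using powr_less_mono[of \<alpha> 1 "real m"] by auto
  have "1 \<le> \<lfloor>a\<rfloor>" using a1 by (simp add: le_floor_iff)
  then have f1: "1 \<le> f" unfolding f_def by (intro le_nat_iff[THEN iffD2]) auto
  have cr: "real c = of_int \<lceil>a\<rceil>" using a1 by (simp add: c_def)
  have fr: "real f = of_int \<lfloor>a\<rfloor>" using \<open>1 \<le> \<lfloor>a\<rfloor>\<close> by (simp add: f_def)
  have fa: "real f \<le> a" using fr by (simp add: of_int_floor_le)
  have ac: "a \<le> real c" using cr by (simp add: le_of_int_ceiling)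
  have "\<lceil>a\<rceil> \<le> int m" using am by (intro ceiling_le) simp
  then have cm: "c \<le> m" by (simp add: c_def nat_le_iff)
  have creal: "real c = real_of_int \<lceil>real m powr \<alpha>\<rceil>" using cr by (simp add: a_def)
  have freal: "real f = real_of_int \<lfloor>real m powr \<alpha>\<rfloor>" using fr by (simp add: a_def)
  have k1: "0 < k i" for i using f1 fa ac by (auto simp: k_def kk_def)
  have km: "k i \<le> m" for i using f1 fa ac cm by (auto simp: k_def kk_def)
  have sp: "space \<mu> = seqspace m" and st: "sets \<mu> = borelT m"
    by (simp_all add: \<mu>_def TT_def borelT_sigma)
  have tot: "emeasure \<mu> (seqspace m) = 1"
    using mu_emeasure[OF m0 k1, where n = 0 and A = "\<lambda>_. UNIV"] by (simp add: \<mu>_def)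
  have NNpos: "0 < NN a c f n" for n using NN_prod[of a c f n] k1 by (simp add: k_def)
  have cylm: "measure \<mu> (cyl m n x) = 1 / real (NN a c f n)"
    if x: "x \<in> seqspace m" "\<forall>i. x i < k i" for n x
  proof -
    have e: "cyl m n x = {z \<in> seqspace m. \<forall>i<n. z i \<in> {x i}}" by (auto simp: cyl_def)
    have i: "emeasure (measure_pmf (pmf_of_set {0..<k i})) {y. y mod m \<in> {x i}} = ennreal (1 / real (k i))" for i
    proof -
      have "{0..<k i} \<inter> {y. y mod m \<in> {x i}} = {x i}"
        using x km[of i] by (auto dest: spec[of _ i])
      then show ?thesis using k1[of i] by (simp add: emeasure_pmf_of_set ennreal_of_nat_eq_real_of_nat divide_ennreal)
    qed
    have "emeasure \<mu> (cyl m n x) = (\<Prod>i<n. ennreal (1 / real (k i)))"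
      unfolding e \<mu>_def mu_emeasure[OF m0 k1] i ..
    also have "\<dots> = ennreal (1 / real (NN a c f n))"
      by (simp add: prod_ennreal NN_prod k_def prod_dividef)
    finally show ?thesis by (simp add: measure_def)
  qed
  have powr_eq: "real m powr (\<alpha> * real n) = a ^ n" for n
  proof -
    have "a powr real n = a ^ n" using a1 by (intro powr_realpow) simp
    then show ?thesis by (simp add: a_def powr_powr)
  qed
  have dens: "ereal (a / real c) \<le> ereal (real m powr (\<alpha> * real n) * measure \<mu> (cyl m n x)) \<and>
              ereal (real m powr (\<alpha> * real n) * measure \<mu> (cyl m n x)) \<le> ereal (a / real f)"
    if x: "x \<in> seqspace m" "\<forall>i. x i < k i" for n x
  proof -
    have N: "0 < real (NN a c f n)" using NNpos by simp
    have inv: "real f * a ^ n \<le> a * NN a c f n" "a * NN a c f n \<le> real c * a ^ n"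
      using NN_inv[OF f1 fa ac] by auto
    have c0: "0 < real c" using ac a1 by simp
    have f0: "0 < real f" using f1 by simp
    have "a / real c \<le> a ^ n / real (NN a c f n)"
      using inv(2) N c0 by (simp add: divide_simps mult.commute)
    moreover have "a ^ n / real (NN a c f n) \<le> a / real f"
      using inv(1) N f0 by (simp add: divide_simps mult.commute)
    ultimately show ?thesis using cylm[OF x] by (simp add: powr_eq)
  qed
  have AE: "AE x in \<mu>. \<forall>i. x i < k i"
  proof (rule AE_all_countable[THEN iffD2], intro allI)
    fix n
    define A where "A = (\<lambda>i. {j. i = n \<longrightarrow> k n \<le> j})"
    have e: "{x \<in> space \<mu>. \<not> x n < k n} = {x \<in> seqspace m. \<forall>i<Suc n. x i \<in> A i}"
    proof -
      have "(\<not> x n < k n) = (\<forall>i<Suc n. x i \<in> A i)" for x unfolding A_def by (auto simp del: not_less)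
      then show ?thesis unfolding sp by blast
    qed
    have z: "emeasure (measure_pmf (pmf_of_set {0..<k n})) {y. y mod m \<in> A n} = 0"
    proof -
      have "y mod m = y" if "y < k n" for y using that km[of n] by simp
      then have "{0..<k n} \<inter> {y. y mod m \<in> A n} = {}" by (auto simp: A_def)
      then show ?thesis using k1[of n] by (simp add: emeasure_pmf_of_set)
    qed
    have E0: "emeasure \<mu> {x \<in> seqspace m. \<forall>i<Suc n. x i \<in> A i} = 0"
      unfolding \<mu>_def mu_emeasure[OF m0 k1] by (simp only: prod.lessThan_Suc z mult_zero_right)
    have S: "{x \<in> seqspace m. \<forall>i<Suc n. x i \<in> A i} \<in> sets \<mu>"
      using prefix_sets[OF m0, of "\<lambda>y. \<forall>i<Suc n. y i \<in> A i" "Suc n"]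
      by (simp add: st pre_def)
    have N: "{x \<in> seqspace m. \<forall>i<Suc n. x i \<in> A i} \<in> null_sets \<mu>"
      by (rule null_setsI[OF E0 S])
    show "AE x in \<mu>. x n < k n"
      by (rule AE_I'[where P = "\<lambda>x. x n < k n", OF N]) (rule e[THEN equalityD1])
  qed
  have hmeas: "(\<lambda>x. ereal (real m powr (\<alpha> * real n) * measure \<mu> (cyl m n x))) \<in> borel_measurable \<mu>" for n
    by (rule measurable_pre[OF m0 sp st, where n = n and F = "\<lambda>y. ereal (real m powr (\<alpha> * real n) * measure \<mu> (cyl m n y))"])
       (simp add: cyl_pre[symmetric])
  have umeas: "upper_density m \<mu> \<alpha> \<in> borel_measurable \<mu>"
    unfolding upper_density_def[abs_def] by (rule borel_measurable_limsup[OF hmeas])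
  have lmeas: "(\<lambda>x. - lower_density m \<mu> \<alpha> x) \<in> borel_measurable \<mu>"
    unfolding lower_density_def using borel_measurable_liminf[OF hmeas] by measurable
  have U: "esssup \<mu> (upper_density m \<mu> \<alpha>) \<le> ereal (a / real f)"
  proof (rule esssup_I[OF umeas])
    show "AE x in \<mu>. upper_density m \<mu> \<alpha> x \<le> ereal (a / real f)"
      using AE
    proof (rule AE_mp)
      show "AE x in \<mu>. (\<forall>i. x i < k i) \<longrightarrow> upper_density m \<mu> \<alpha> x \<le> ereal (a / real f)"
      proof (rule AE_I2, rule impI)
        fix x assume "x \<in> space \<mu>" "\<forall>i. x i < k i"
        then show "upper_density m \<mu> \<alpha> x \<le> ereal (a / real f)"
          unfolding upper_density_def using dens[of x] sp
          by (intro Limsup_bounded) auto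
      qed
    qed
  qed
  have L0: "esssup \<mu> (\<lambda>x. - lower_density m \<mu> \<alpha> x) \<le> - ereal (a / real c)"
  proof (rule esssup_I[OF lmeas])
    show "AE x in \<mu>. - lower_density m \<mu> \<alpha> x \<le> - ereal (a / real c)"
      using AE
    proof (rule AE_mp)
      show "AE x in \<mu>. (\<forall>i. x i < k i) \<longrightarrow> - lower_density m \<mu> \<alpha> x \<le> - ereal (a / real c)"
      proof (rule AE_I2, rule impI)
        fix x assume "x \<in> space \<mu>" "\<forall>i. x i < k i"
        then have "ereal (a / real c) \<le> lower_density m \<mu> \<alpha> x"
          unfolding lower_density_def using dens[of x] sp
          by (intro Liminf_bounded) auto
        then show "- lower_density m \<mu> \<alpha> x \<le> - ereal (a / real c)"
          by (simp only: ereal_minus_le_minus)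
      qed
    qed
  qed
  have L: "ereal (a / real c) \<le> essinf \<mu> (lower_density m \<mu> \<alpha>)"
  proof -
    have "- (- ereal (a / real c)) \<le> - esssup \<mu> (\<lambda>x. - lower_density m \<mu> \<alpha> x)"
      using L0 by (simp only: ereal_minus_le_minus)
    then show ?thesis unfolding essinf_def by (simp only: ereal_uminus_uminus)
  qed
  have apos: "0 < a / real c" using a1 ac by simp
  have C: "Cconst m \<mu> \<alpha> \<le> real c / real f"
  proof -
    define UU where "UU = esssup \<mu> (upper_density m \<mu> \<alpha>)"
    define LL where "LL = essinf \<mu> (lower_density m \<mu> \<alpha>)"
    have U': "real_of_ereal UU \<le> a / real f"
      using U a1 fa f1 unfolding UU_def[symmetric]
      by (cases UU) auto
    have cf: "0 \<le> real c / real f" by simp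
    have "real_of_ereal UU / real_of_ereal LL \<le> real c / real f"
    proof (cases LL)
      case (real r)
      then have r: "a / real c \<le> r" using L by (simp add: LL_def)
      have rp: "0 < r" using r apos by simp
      show "real_of_ereal UU / real_of_ereal LL \<le> real c / real f"
      proof (cases "real_of_ereal UU \<le> 0")
        case True
        then have "real_of_ereal UU / r \<le> 0" using rp by (simp add: divide_nonpos_pos)
        then have "real_of_ereal UU / r \<le> real c / real f" using cf by linarith
        then show "real_of_ereal UU / real_of_ereal LL \<le> real c / real f" using real by simp
      next
        case False
        have "real_of_ereal UU / r \<le> (a / real f) / (a / real c)"
        proof (rule frac_le)
          show "0 \<le> a / real f" using a1 f1 by simp
          show "real_of_ereal UU \<le> a / real f" by (rule U')
          show "0 < a / real c" by (rule apos)
          show "a / real c \<le> r" by (rule r)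
        qed
        also have "\<dots> = real c / real f" using a1 by (simp add: field_simps)
        finally show "real_of_ereal UU / real_of_ereal LL \<le> real c / real f" using real by simp
      qed
    qed (use cf in auto)
    then show ?thesis unfolding Cconst_def UU_def LL_def .
  qed
  show ?thesis
  proof (intro exI[of _ \<mu>] conjI)
    show "esssup \<mu> (upper_density m \<mu> \<alpha>) < \<infinity>" using U by (rule le_less_trans) simp
    show "0 < essinf \<mu> (lower_density m \<mu> \<alpha>)" 
    proof -
      have "(0::ereal) < ereal (a / real c)" using apos by simp
      then show ?thesis using L by (rule less_le_trans)
    qed
    show "Cconst m \<mu> \<alpha> \<le> real_of_int \<lceil>real m powr \<alpha>\<rceil> / real_of_int \<lfloor>real m powr \<alpha>\<rfloor>"
      using C creal freal by simp
  qed (use sp st tot in auto)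
qed

end
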